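(* Consider the system $\frac{dT}{dt}=s+r_TT\left(1-\frac{T+I}{T_{\max}}\right)-dT-\frac{bTV}{T+I}$, $\frac{dI}{dt}=r_II\left(1-\frac{T+I}{T_{\max}}\right)+\frac{bTV}{T+I}-\delta I$, $\frac{dV}{dt}=\rho R^*I-cV-\frac{bTV}{T+I}$, with $\rho$ as bifurcation parameter. There exist parameter values for which $\delta>r_I(1-p_0/T_{\max})$, ${\cal R}_0=1$, zero is a simple eigenvalue of the Jacobian at the DFE with all other eigenvalues having negative real parts, $b_{VW}>0$ and $a>0$; and there exist parameter values for which the same hold but with $a<0$. Thus the system exhibits both backward and forward bifurcations.
   Context: Parameters $s,r_T,T_{\max},d,b,r_I,\delta,\rho,R^*,c$ are positive constants. Let $p_0=\left(r_T-d+\sqrt{(r_T-d)^2+\frac{4sr_T}{T_{\max}}}\right)\frac{T_{\max}}{2r_T}$, $a_{11}=\sqrt{(r_T-d)^2+\frac{4sr_T}{T_{\max}}}$, $a_{12}=\frac{p_0r_T}{T_{\max}}$. The disease-free equilibrium (DFE) is $x_0=(T,I,V)=(p_0,0,0)$ (independent of $\rho$); $I,V$ are the infected variables. For $\delta>r_I(1-p_0/T_{\max})$, ${\cal R}_0=\frac{b\rho R^*}{(b+c)\left(\delta-r_I(1-\frac{p_0}{T_{\max}})\right)}$. Ordering variables as $(T,I,V)$ and writing $f=(f_1,f_2,f_3)$ for the right-hand side, let $v=(0,b+c,b)$ and $w=(-a_{12}(b+c)-b\rho R^*,\,a_{11}(b+c),\,a_{11}\rho R^* )$ (left and right null vectors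 of the Jacobian at the DFE when ${\cal R}_0=1$). Define $a=\frac12\sum_{i,j,k}v_iw_jw_k\frac{\partial^2f_i}{\partial x_j\partial x_k}(x_0)$ and $b_{VW}=\sum_{i,j}v_iw_j\frac{\partial^2f_i}{\partial x_j\partial\rho}(x_0)$ (van den Driessche–Watmough coefficients; $a>0,b_{VW}>0$ indicates a backward bifurcation and $a<0,b_{VW}>0$ a forward bifurcation at ${\cal R}_0=1$). *)

theory Defs
  imports "HOL-Analysis.Derivative" "Jordan_Normal_Form.Char_Poly"
begin

record par =
  p_s :: real
  p_rT :: real
  p_Tmax :: real
  p_d :: real
  p_b :: real
  p_rI :: real
  p_delta :: real
  p_rho :: real
  p_Rstar :: real
  p_c :: real

definition par_pos :: "par \<Rightarrow> bool" where
  "par_pos P \<longleftrightarrow> p_s P > 0 \<and> p_rT P > 0 \<and> p_Tmax P > 0 \<and> p_d P > 0 \<and> p_b P > 0 \<and>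
     p_rI P > 0 \<and> p_delta P > 0 \<and> p_rho P > 0 \<and> p_Rstar P > 0 \<and> p_c P > 0"

definition rhs :: "par \<Rightarrow> nat \<Rightarrow> (nat \<Rightarrow> real) \<Rightarrow> real" where
  "rhs P i x = (let T = x 0; I = x 1; V = x 2 in
     if i = 0 then p_s P + p_rT P * T * (1 - (T + I) / p_Tmax P) - p_d P * T
                   - p_b P * T * V / (T + I)
     else if i = 1 then p_rI P * I * (1 - (T + I) / p_Tmax P) + p_b P * T * V / (T + I)
                   - p_delta P * I
     else p_rho P * p_Rstar P * I - p_c P * V - p_b P * T * V / (T + I))"

definition a11 :: "par \<Rightarrow> real" where
  "a11 P = sqrt ((p_rT P - p_d P)^2 + 4 * p_s P * p_rT P / p_Tmax P)"

definition p0 :: "par \<Rightarrow> real" where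
  "p0 P = (p_rT P - p_d P + a11 P) * p_Tmax P / (2 * p_rT P)"

definition a12 :: "par \<Rightarrow> real" where
  "a12 P = p0 P * p_rT P / p_Tmax P"

definition R0 :: "par \<Rightarrow> real" where
  "R0 P = p_b P * p_rho P * p_Rstar P /
     ((p_b P + p_c P) * (p_delta P - p_rI P * (1 - p0 P / p_Tmax P)))"

definition dfe :: "par \<Rightarrow> nat \<Rightarrow> real" where
  "dfe P k = (if k = 0 then p0 P else 0)"

definition unitv :: "nat \<Rightarrow> nat \<Rightarrow> real" where
  "unitv j k = (if k = j then 1 else 0)"

definition d1 :: "par \<Rightarrow> nat \<Rightarrow> nat \<Rightarrow> real" where
  "d1 P i j = deriv (\<lambda>t. rhs P i (\<lambda>l. dfe P l + t * unitv j l)) 0"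

definition d2 :: "par \<Rightarrow> nat \<Rightarrow> nat \<Rightarrow> nat \<Rightarrow> real" where
  "d2 P i j k = deriv (\<lambda>\<sigma>. deriv (\<lambda>t. rhs P i (\<lambda>l. dfe P l + \<sigma> * unitv k l + t * unitv j l)) 0) 0"

text \<open>Mixed second derivative of f_i w.r.t. x_j and rho at the DFE (the DFE does not depend on rho).\<close>
definition d2rho :: "par \<Rightarrow> nat \<Rightarrow> nat \<Rightarrow> real" where
  "d2rho P i j = deriv (\<lambda>r. deriv (\<lambda>t. rhs (P\<lparr>p_rho := r\<rparr>) i (\<lambda>l. dfe P l + t * unitv j l)) 0) (p_rho P)"

text \<open>Jacobian at the DFE (3x3), as a complex matrix for spectral statements.\<close>
definition jac :: "par \<Rightarrow> complex mat" where
  "jac P = mat 3 3 (\<lambda>(i, j). complex_of_real (d1 P i j))"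

definition vvec :: "par \<Rightarrow> nat \<Rightarrow> real" where
  "vvec P i = (if i = 0 then 0 else if i = 1 then p_b P + p_c P else p_b P)"

definition wvec :: "par \<Rightarrow> nat \<Rightarrow> real" where
  "wvec P i = (if i = 0 then - a12 P * (p_b P + p_c P) - p_b P * p_rho P * p_Rstar P
               else if i = 1 then a11 P * (p_b P + p_c P)
               else a11 P * p_rho P * p_Rstar P)"

definition coef_a :: "par \<Rightarrow> real" where
  "coef_a P = 1/2 * (\<Sum>i<3. \<Sum>j<3. \<Sum>k<3. vvec P i * wvec P j * wvec P k * d2 P i j k)"

definition coef_b :: "par \<Rightarrow> real" where
  "coef_b P = (\<Sum>i<3. \<Sum>j<3. vvec P i * wvec P j * d2rho P i j)"

definition spectral_cond :: "par \<Rightarrow> bool" where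
  "spectral_cond P \<longleftrightarrow> order 0 (char_poly (jac P)) = 1 \<and>
     (\<forall>z. poly (char_poly (jac P)) z = 0 \<longrightarrow> z \<noteq> 0 \<longrightarrow> Re z < 0)"

definition bif_hyps :: "par \<Rightarrow> bool" where
  "bif_hyps P \<longleftrightarrow> par_pos P \<and> p_delta P > p_rI P * (1 - p0 P / p_Tmax P) \<and> R0 P = 1 \<and>
     spectral_cond P \<and> coef_b P > 0"

end

theory Submission imports Defs begin

definition qt :: "real \<Rightarrow> real \<Rightarrow> real \<Rightarrow> real \<Rightarrow> real \<Rightarrow> real \<Rightarrow> real \<Rightarrow> real \<Rightarrow> real" where
  "qt p a0 a1 a2 b0 b1 b2 s = ((b0*(s*a2) + (p+s*a0)*b2)*(p+s*a0+s*a1) - (p+s*a0)*(s*a2)*(b0+b1))/(p+s*a0+s*a1)^2"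

lemma qt_deriv:
  assumes "p \<noteq> 0" "D = -(a2*b1+a1*b2)/p"
  shows "((qt p a0 a1 a2 b0 b1 b2) has_real_derivative D) (at 0)"
proof -
  have e: "qt p a0 a1 a2 b0 b1 b2 = (\<lambda>s. ((b0*(s*a2) + (p+s*a0)*b2)*(p+s*a0+s*a1) - (p+s*a0)*(s*a2)*(b0+b1))/((p+s*a0+s*a1)*(p+s*a0+s*a1)))"
    by (simp add: fun_eq_iff qt_def power2_eq_square)
  show ?thesis unfolding e
    apply (rule derivative_eq_intros refl | (simp add: assms; fail))+
    using assms(1) unfolding assms(2)
    apply (simp add: power2_eq_square)
    apply (simp add: field_simps)
    done
qed

lemma gen0:
  fixes p ua ub uc xa xb xc rT Tm bb dd cs s :: real
  assumes "p + s*ua + s*ub \<noteq> 0" "Tm \<noteq> 0"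
  shows "((\<lambda>t. cs + rT * (p + s*ua + t*xa) * (1 - ((p + s*ua + t*xa) + (s*ub + t*xb)) / Tm)
      - dd * (p + s*ua + t*xa)
      - bb * (p + s*ua + t*xa) * (s*uc + t*xc) / ((p + s*ua + t*xa) + (s*ub + t*xb))) has_real_derivative
   rT*xa*(1 - (p + s*ua + s*ub)/Tm) - rT*(p+s*ua)*(xa+xb)/Tm - dd*xa
   - bb*qt p ua ub uc xa xb xc s) (at 0)"
    unfolding qt_def
    apply (rule derivative_eq_intros refl | (simp add: assms; fail))+
    using assms
    apply (simp add: power2_eq_square)
    apply (simp add: field_simps)
    done

lemma gen1:
  fixes p ua ub uc xa xb xc rI Tm bb dl s :: real
  assumes "p + s*ua + s*ub \<noteq> 0" "Tm \<noteq> 0"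
  shows "((\<lambda>t. rI * (s*ub + t*xb) * (1 - ((p + s*ua + t*xa) + (s*ub + t*xb)) / Tm)
      + bb * (p + s*ua + t*xa) * (s*uc + t*xc) / ((p + s*ua + t*xa) + (s*ub + t*xb))
      - dl * (s*ub + t*xb)) has_real_derivative
   rI*xb*(1 - (p + s*ua + s*ub)/Tm) - rI*(s*ub)*(xa+xb)/Tm
   + bb*qt p ua ub uc xa xb xc s - dl*xb) (at 0)"
    unfolding qt_def
    apply (rule derivative_eq_intros refl | (simp add: assms; fail))+
    using assms
    apply (simp add: power2_eq_square)
    apply (simp add: field_simps)
    done

lemma gen2:
  fixes p ua ub uc xa xb xc rr bb cc s :: real
  assumes "p + s*ua + s*ub \<noteq> 0"
  shows "((\<lambda>t. rr * (s*ub + t*xb) - cc * (s*uc + t*xc)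
      - bb * (p + s*ua + t*xa) * (s*uc + t*xc) / ((p + s*ua + t*xa) + (s*ub + t*xb))) has_real_derivative
   rr*xb - cc*xc - bb*qt p ua ub uc xa xb xc s) (at 0)"
    unfolding qt_def
    apply (rule derivative_eq_intros refl | (simp add: assms; fail))+
    using assms
    apply (simp add: power2_eq_square)
    apply (simp add: field_simps)
    done

definition Gf :: "par \<Rightarrow> real \<Rightarrow> nat \<Rightarrow> nat \<Rightarrow> nat \<Rightarrow> real \<Rightarrow> real" where
 "Gf Q p i j k s = (let a0 = unitv k 0; a1 = unitv k 1; a2 = unitv k 2;
     b0 = unitv j 0; b1 = unitv j 1; b2 = unitv j 2; Tm = p_Tmax Q in
   if i = 0 then p_rT Q*b0*(1 - (p + s*a0 + s*a1)/Tm) - p_rT Q*(p+s*a0)*(b0+b1)/Tm - p_d Q*b0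
   - p_b Q*qt p a0 a1 a2 b0 b1 b2 s
   else if i = 1 then p_rI Q*b1*(1 - (p + s*a0 + s*a1)/Tm) - p_rI Q*(s*a1)*(b0+b1)/Tm
   + p_b Q*qt p a0 a1 a2 b0 b1 b2 s - p_delta Q*b1
   else p_rho Q * p_Rstar Q*b1 - p_c Q*b2 - p_b Q*qt p a0 a1 a2 b0 b1 b2 s)"

lemma inner_rhs:
  assumes "p + s*unitv k 0 + s*unitv k 1 \<noteq> 0" "p_Tmax Q \<noteq> 0"
  shows "((\<lambda>t. rhs Q i (\<lambda>l. (if l = 0 then p else 0) + s*unitv k l + t*unitv j l)) has_real_derivative Gf Q p i j k s) (at 0)"
proof -
  consider "i = 0" | "i = 1" | "i \<noteq> 0 \<and> i \<noteq> 1" by blast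
  then show ?thesis
  proof cases
    case 1
    have e: "(\<lambda>t. rhs Q i (\<lambda>l. (if l = 0 then p else 0) + s*unitv k l + t*unitv j l)) =
      (\<lambda>t. p_s Q + p_rT Q * (p + s*unitv k 0 + t*unitv j 0) * (1 - ((p + s*unitv k 0 + t*unitv j 0) + (s*unitv k 1 + t*unitv j 1)) / p_Tmax Q)
      - p_d Q * (p + s*unitv k 0 + t*unitv j 0)
      - p_b Q * (p + s*unitv k 0 + t*unitv j 0) * (s*unitv k 2 + t*unitv j 2) / ((p + s*unitv k 0 + t*unitv j 0) + (s*unitv k 1 + t*unitv j 1)))"
      using 1 by (simp add: fun_eq_iff rhs_def Let_def)
    show ?thesis unfolding e using gen0[where xa="unitv j 0" and xb="unitv j 1" and xc="unitv j 2" and uc="unitv k 2" and rT="p_rT Q" and bb="p_b Q" and dd="p_d Q" and cs="p_s Q", OF assms] 1 by (simp add: Gf_def Let_def)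
  next
    case 2
    have e: "(\<lambda>t. rhs Q i (\<lambda>l. (if l = 0 then p else 0) + s*unitv k l + t*unitv j l)) =
      (\<lambda>t. p_rI Q * (s*unitv k 1 + t*unitv j 1) * (1 - ((p + s*unitv k 0 + t*unitv j 0) + (s*unitv k 1 + t*unitv j 1)) / p_Tmax Q)
      + p_b Q * (p + s*unitv k 0 + t*unitv j 0) * (s*unitv k 2 + t*unitv j 2) / ((p + s*unitv k 0 + t*unitv j 0) + (s*unitv k 1 + t*unitv j 1))
      - p_delta Q * (s*unitv k 1 + t*unitv j 1))"
      using 2 by (simp add: fun_eq_iff rhs_def Let_def)
    show ?thesis unfolding e using gen1[where xa="unitv j 0" and xb="unitv j 1" and xc="unitv j 2" and uc="unitv k 2" and rI="p_rI Q" and bb="p_b Q" and dl="p_delta Q", OF assms] 2 by (simp add: Gf_def Let_def)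
  next
    case 3
    have e: "(\<lambda>t. rhs Q i (\<lambda>l. (if l = 0 then p else 0) + s*unitv k l + t*unitv j l)) =
      (\<lambda>t. (p_rho Q * p_Rstar Q) * (s*unitv k 1 + t*unitv j 1) - p_c Q * (s*unitv k 2 + t*unitv j 2)
      - p_b Q * (p + s*unitv k 0 + t*unitv j 0) * (s*unitv k 2 + t*unitv j 2) / ((p + s*unitv k 0 + t*unitv j 0) + (s*unitv k 1 + t*unitv j 1)))"
      using 3 by (simp add: fun_eq_iff rhs_def Let_def)
    show ?thesis unfolding e using gen2[where xa="unitv j 0" and xb="unitv j 1" and xc="unitv j 2" and uc="unitv k 2" and rr="p_rho Q * p_Rstar Q" and bb="p_b Q" and cc="p_c Q", OF assms(1)] 3 by (simp add: Gf_def Let_def)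
  qed
qed


lemma outer:
  fixes g :: "real \<Rightarrow> real \<Rightarrow> real"
  assumes "e > 0" "\<And>s. \<bar>s\<bar> < e \<Longrightarrow> (g s has_real_derivative G s) (at 0)"
    "(G has_real_derivative D) (at 0)"
  shows "deriv (\<lambda>s. deriv (g s) 0) 0 = D"
proof (rule DERIV_imp_deriv)
  show "((\<lambda>s. deriv (g s) 0) has_real_derivative D) (at 0)"
  proof (rule has_field_derivative_transform_within_open[OF assms(3), of "ball 0 e"])
    show "open (ball (0::real) e)" by simp
    show "(0::real) \<in> ball 0 e" using assms(1) by simp
    fix x :: real assume "x \<in> ball 0 e"
    then have "\<bar>x\<bar> < e" by simp
    then show "G x = deriv (g x) 0" using DERIV_imp_deriv[OF assms(2)] by simp
  qed
qed

lemma unitv_sum: "unitv k 0 + unitv k 1 = 0 \<or> unitv k 0 + unitv k 1 = (1::real)"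
  by (auto simp: unitv_def)

lemma nz: assumes "(p::real) > 0" "\<bar>s\<bar> < p/2" shows "p + s*unitv k 0 + s*unitv k 1 \<noteq> 0"
proof -
  have "p + s*unitv k 0 + s*unitv k 1 = p + s*(unitv k 0 + unitv k 1)" by (simp add: algebra_simps)
  then show ?thesis using unitv_sum[of k] assms by auto
qed

lemma d1_eq: assumes "p0 P \<noteq> 0" "p_Tmax P \<noteq> 0" shows "d1 P i j = Gf P (p0 P) i j 0 0"
proof -
  have e: "(\<lambda>t. rhs P i (\<lambda>l. dfe P l + t*unitv j l)) = (\<lambda>t. rhs P i (\<lambda>l. (if l = 0 then p0 P else 0) + 0*unitv 0 l + t*unitv j l))"
    by (simp add: dfe_def)
  show ?thesis unfolding d1_def e
    by (rule DERIV_imp_deriv[OF inner_rhs]) (use assms in simp_all)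
qed

definition Dfun :: "par \<Rightarrow> nat \<Rightarrow> nat \<Rightarrow> nat \<Rightarrow> real" where
  "Dfun P i j k = (let a0 = unitv k 0; a1 = unitv k 1; a2 = unitv k 2;
     b0 = unitv j 0; b1 = unitv j 1; b2 = unitv j 2 in
   if i = 1 then - p_rI P*(b1*(a0+a1) + a1*(b0+b1))/p_Tmax P - p_b P*(a2*b1+a1*b2)/p0 P
   else p_b P*(a2*b1+a1*b2)/p0 P)"

lemma Gf_deriv: assumes "p0 P \<noteq> 0" "p_Tmax P \<noteq> 0" "i = 1 \<or> i = 2"
  shows "(Gf P (p0 P) i j k has_real_derivative Dfun P i j k) (at 0)"
  using assms(3)
proof
  assume i: "i = 1"
  have e: "Gf P (p0 P) i j k = (\<lambda>s. p_rI P*unitv j 1*(1 - (p0 P + s*unitv k 0 + s*unitv k 1)/p_Tmax P) - p_rI P*(s*unitv k 1)*(unitv j 0+unitv j 1)/p_Tmax P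
   + p_b P*qt (p0 P) (unitv k 0) (unitv k 1) (unitv k 2) (unitv j 0) (unitv j 1) (unitv j 2) s - p_delta P*unitv j 1)"
    using i by (simp add: fun_eq_iff Gf_def Let_def)
  show ?thesis unfolding e
    apply (rule derivative_eq_intros refl qt_deriv | (simp add: assms; fail))+
    using assms i
    apply (simp add: Dfun_def Let_def)
    apply (simp add: field_simps)
    done
next
  assume i: "i = 2"
  have e: "Gf P (p0 P) i j k = (\<lambda>s. p_rho P * p_Rstar P*unitv j 1 - p_c P*unitv j 2
   - p_b P*qt (p0 P) (unitv k 0) (unitv k 1) (unitv k 2) (unitv j 0) (unitv j 1) (unitv j 2) s)"
    using i by (simp add: fun_eq_iff Gf_def Let_def)
  show ?thesis unfolding e
    apply (rule derivative_eq_intros refl qt_deriv | (simp add: assms; fail))+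
    using assms i
    apply (simp add: Dfun_def Let_def)
    apply (simp add: field_simps)
    done
qed

lemma d2_eq: assumes "p0 P > 0" "p_Tmax P \<noteq> 0" "i = 1 \<or> i = 2"
  shows "d2 P i j k = Dfun P i j k"
proof -
  have e: "(\<lambda>l. dfe P l + s * unitv k l + t * unitv j l) = (\<lambda>l. (if l = 0 then p0 P else 0) + s * unitv k l + t * unitv j l)" for s t
    by (simp add: dfe_def fun_eq_iff)
  show ?thesis
    unfolding d2_def e
  proof (rule outer[where g = "\<lambda>s t. rhs P i (\<lambda>l. (if l = 0 then p0 P else 0) + s * unitv k l + t * unitv j l)"])
    show "p0 P / 2 > 0" using assms by simp
    fix s :: real assume "\<bar>s\<bar> < p0 P / 2"
    then show "((\<lambda>t. rhs P i (\<lambda>l. (if l = 0 then p0 P else 0) + s * unitv k l + t * unitv j l)) has_real_derivative Gf P (p0 P) i j k s) (at 0)"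
      by (intro inner_rhs nz assms)
  next
    show "(Gf P (p0 P) i j k has_real_derivative Dfun P i j k) (at 0)"
      using assms by (intro Gf_deriv) auto
  qed
qed

lemma p0_upd[simp]: "p0 (P\<lparr>p_rho := r\<rparr>) = p0 P"
  by (simp add: p0_def a11_def)

lemma d2rho_eq: assumes "p0 P \<noteq> 0" "p_Tmax P \<noteq> 0" "i = 1 \<or> i = 2"
  shows "d2rho P i j = (if i = 2 then p_Rstar P * unitv j 1 else 0)"
proof -
  have e: "(\<lambda>t. rhs (P\<lparr>p_rho := r\<rparr>) i (\<lambda>l. dfe P l + t*unitv j l)) = (\<lambda>t. rhs (P\<lparr>p_rho := r\<rparr>) i (\<lambda>l. (if l = 0 then p0 P else 0) + 0*unitv 0 l + t*unitv j l))" for r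
    by (simp add: dfe_def)
  have f: "deriv (\<lambda>t. rhs (P\<lparr>p_rho := r\<rparr>) i (\<lambda>l. dfe P l + t*unitv j l)) 0 = Gf (P\<lparr>p_rho := r\<rparr>) (p0 P) i j 0 0" for r
    unfolding e by (rule DERIV_imp_deriv[OF inner_rhs]) (use assms in simp_all)
  show ?thesis
    unfolding d2rho_def f
  proof (rule DERIV_imp_deriv)
    show "((\<lambda>r. Gf (P\<lparr>p_rho := r\<rparr>) (p0 P) i j 0 0) has_real_derivative (if i = 2 then p_Rstar P * unitv j 1 else 0)) (at (p_rho P))"
      using assms(3)
    proof
      assume i: "i = 1"
      show ?thesis using i by (simp add: Gf_def Let_def)
    next
      assume i: "i = 2"
      show ?thesis using i unfolding Gf_def Let_def
        by (auto intro!: derivative_eq_intros)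
    qed
  qed
qed



lemma det1: assumes "(A :: 'a :: comm_ring_1 mat) \<in> carrier_mat 1 1" shows "det A = A $$ (0,0)"
proof -
  have "mat_delete A 0 0 \<in> carrier_mat 0 0" using mat_delete_carrier[OF assms] by simp
  then show ?thesis
  using laplace_expansion_column[OF assms, of 0] assms
  by (simp add: cofactor_def)
qed

lemma det1m: "det (mat (Suc 0) (Suc 0) f :: 'a :: comm_ring_1 mat) = f (0,0)"
  by (subst det1) auto

lemma det2: assumes "(A :: 'a :: comm_ring_1 mat) \<in> carrier_mat 2 2"
  shows "det A = A $$ (0,0) * A $$ (1,1) - A $$ (1,0) * A $$ (0,1)"
  using laplace_expansion_column[OF assms, of 0] assms
  by (simp add: cofactor_def numeral_2_eq_2 det1m mat_delete_def)

lemma det2m: "det (mat (Suc (Suc 0)) (Suc (Suc 0)) f :: 'a :: comm_ring_1 mat) = f (0,0) * f (1,1) - f (1,0) * f (0,1)"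
  by (subst det2) (auto simp: numeral_2_eq_2)

lemma det3: assumes "(A :: 'a :: comm_ring_1 mat) \<in> carrier_mat 3 3"
  shows "det A = A $$ (0,0) * (A $$ (1,1) * A $$ (2,2) - A $$ (2,1) * A $$ (1,2))
     - A $$ (1,0) * (A $$ (0,1) * A $$ (2,2) - A $$ (2,1) * A $$ (0,2))
     + A $$ (2,0) * (A $$ (0,1) * A $$ (1,2) - A $$ (1,1) * A $$ (0,2))"
  using laplace_expansion_column[OF assms, of 0] assms
  by (simp add: cofactor_def eval_nat_numeral det2m mat_delete_def algebra_simps)


definition Pr :: "real \<Rightarrow> par" where
  "Pr r = \<lparr>p_s = 1/4, p_rT = 1, p_Tmax = 1, p_d = 1, p_b = 1, p_rI = r, p_delta = 1 + r/2,
     p_rho = 2, p_Rstar = 1, p_c = 1\<rparr>"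

lemma Pr_simps[simp]: "p_s (Pr r) = 1/4" "p_rT (Pr r) = 1" "p_Tmax (Pr r) = 1" "p_d (Pr r) = 1"
  "p_b (Pr r) = 1" "p_rI (Pr r) = r" "p_delta (Pr r) = 1 + r/2" "p_rho (Pr r) = 2"
  "p_Rstar (Pr r) = 1" "p_c (Pr r) = 1"
  by (simp_all add: Pr_def)

lemma a11_Pr[simp]: "a11 (Pr r) = 1" by (simp add: a11_def)
lemma p0_Pr[simp]: "p0 (Pr r) = 1/2" by (simp add: p0_def)
lemma a12_Pr[simp]: "a12 (Pr r) = 1/2" by (simp add: a12_def)

lemma R0_Pr: "R0 (Pr r) = 1" by (simp add: R0_def)

lemma d1_Pr: "d1 (Pr r) i j = Gf (Pr r) (1/2) i j 0 0"
  using d1_eq[of "Pr r" i j] by simp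

lemma coef_a_Pr: "coef_a (Pr r) = 4*r - 8"
proof -
  have d: "d2 (Pr r) (Suc 0) j k = Dfun (Pr r) 1 j k" "d2 (Pr r) (Suc (Suc 0)) j k = Dfun (Pr r) (Suc (Suc 0)) j k" for j k
    using d2_eq[of "Pr r" "Suc 0"] d2_eq[of "Pr r" "Suc (Suc 0)"] by auto
  show ?thesis
    unfolding coef_a_def
    by (simp add: eval_nat_numeral d Dfun_def unitv_def vvec_def wvec_def Let_def)
qed

lemma coef_b_Pr: "coef_b (Pr r) = 2"
proof -
  have d: "d2rho (Pr r) (Suc 0) j = 0" "d2rho (Pr r) (Suc (Suc 0)) j = unitv j 1" for j
    using d2rho_eq[of "Pr r"] by auto
  show ?thesis
    unfolding coef_b_def
    by (simp add: eval_nat_numeral d unitv_def vvec_def wvec_def)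
qed

lemma jac_Pr: "jac (Pr r) = mat 3 3 (\<lambda>(i,j). complex_of_real (Gf (Pr r) (1/2) i j 0 0))"
  by (simp add: jac_def d1_Pr)

lemma cp_Pr: "char_poly (jac (Pr r)) = [:0,1:] * [:3,4,1:]"
proof -
  have c: "char_poly_matrix (jac (Pr r)) \<in> carrier_mat 3 3"
    by (simp add: jac_def)
  show ?thesis
    unfolding char_poly_def det3[OF c]
    apply (simp add: char_poly_matrix_def jac_Pr Gf_def qt_def unitv_def eval_nat_numeral)
    done
qed


lemma spectral_Pr: "spectral_cond (Pr r)"
proof -
  have o1: "order 0 [:0::complex,1:] = 1"
    using order_power_n_n[of "0::complex" 1] by simp
  have o2: "order 0 [:3::complex,4,1:] = 0"
    by (rule order_0I) simp
  have "order 0 ([:0::complex,1:] * [:3,4,1:]) = 1"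
    by (subst order_mult) (use o1 o2 in auto)
  moreover have "Re z < 0" if "poly ([:0::complex,1:] * [:3,4,1:]) z = 0" "z \<noteq> 0" for z
  proof -
    have "3 + z * (4 + z) = 0" using that by simp
    then have "(z + 1) * (z + 3) = 0" by (simp add: algebra_simps)
    then have "z = -1 \<or> z = -3"
      by (auto simp: add_eq_0_iff2)
    then show ?thesis by auto
  qed
  ultimately show ?thesis unfolding spectral_cond_def cp_Pr by auto
qed

lemma bif_Pr: assumes "r > 0" shows "bif_hyps (Pr r)"
  unfolding bif_hyps_def par_pos_def
  using assms spectral_Pr R0_Pr coef_b_Pr by simp

theorem theorem3:
  shows "(\<exists>P. bif_hyps P \<and> coef_a P > 0) \<and> (\<exists>P. bif_hyps P \<and> coef_a P < 0)"
proof
  show "\<exists>P. bif_hyps P \<and> coef_a P > 0"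
    by (rule exI[of _ "Pr 10"]) (simp add: bif_Pr coef_a_Pr)
  show "\<exists>P. bif_hyps P \<and> coef_a P < 0"
    by (rule exI[of _ "Pr 1"]) (simp add: bif_Pr coef_a_Pr)
qed

end
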